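(* Let $\mathbf{A}(i)$ for all $i=1,\ldots,k$ be conforming block triangular matrices over an idempotent semifield (e.g. max-plus algebra) given by \[ \mathbf{A}(i)=\mathbf{D}(i)\oplus\mathbf{T}(i),\quad \mathbf{D}(i)=\begin{pmatrix}\mathbf{D}_{1}(i) & \mathbf{0}\\ \mathbf{0} & \mathbf{D}_{2}(i)\end{pmatrix},\quad \mathbf{T}(i)=\begin{pmatrix}\mathbf{0} & \mathbf{T}_{12}(i)\\ \mathbf{0} & \mathbf{0}\end{pmatrix}. \] Let $\mathbf{A}_{k}=\mathbf{A}(1)\cdots\mathbf{A}(k)$, $\mathbf{D}_{j}(l,m)=\bigotimes_{i=l}^{m}\mathbf{D}_{j}(i)$ and $\mathbf{D}_{jk}=\mathbf{D}_{j}(1,k)$ for $j=1,2$, with empty products equal to the identity matrix $\mathbf{I}$. Then the following double-inequality holds: \[ \|\mathbf{D}_{1k}\|\oplus\|\mathbf{D}_{2k}\| \leq \|\mathbf{A}_{k}\| \leq \|\mathbf{D}_{1k}\|\oplus\|\mathbf{D}_{2k}\| \oplus \bigoplus_{j=1}^{k}\|\mathbf{T}(j)\| \bigoplus_{i=1}^{k}\|\mathbf{D}_{1}(1,i-1)\|\,\|\mathbf{D}_{2}(i+1,k)\|. \]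
   Context: Work in an idempotent semifield $(\mathbb{X},\oplus,\otimes,\mathbb{0},\mathbb{1})$ (e.g. max-plus algebra with $\oplus=\max$, $\otimes=+$, $\mathbb{0}=-\infty$, $\mathbb{1}=0$), totally ordered by $x\leq y\iff x\oplus y=y$; matrix operations are defined componentwise as usual with $\oplus$ and $\otimes$ (multiplication sign omitted). $\mathbf{0}$ denotes a zero matrix (all entries $\mathbb{0}$), $\mathbf{I}$ the identity matrix. The tropical norm of a matrix is $\|\mathbf{A}\|=\bigoplus_{i,j}a_{ij}$ (the maximum entry in max-plus algebra), satisfying $\|\mathbf{A}\oplus\mathbf{B}\|=\|\mathbf{A}\|\oplus\|\mathbf{B}\|$, $\|\mathbf{A}\mathbf{C}\|\leq\|\mathbf{A}\|\|\mathbf{C}\|$, $\|x\mathbf{A}\|=x\|\mathbf{A}\|$. *)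

theory Defs
  imports "HOL-Analysis.Finite_Cartesian_Product"
begin

class idem_semifield = comm_semiring_1 + inverse + linorder +
  assumes add_idem: "x + x = x"
  assumes mult_inverse: "x \<noteq> 0 \<Longrightarrow> x * inverse x = 1"
  assumes less_eq_iff_add: "x \<le> y \<longleftrightarrow> x + y = y"

definition tnorm :: "'a::idem_semifield ^'c::finite ^'r::finite \<Rightarrow> 'a" where
  "tnorm M = (\<Sum>i\<in>UNIV. \<Sum>j\<in>UNIV. M $ i $ j)"

text \<open>Ordered product f(l) f(l+1) ... f(m); identity if l > m.\<close>
definition mprod :: "(nat \<Rightarrow> 'a::semiring_1 ^'n::finite ^'n) \<Rightarrow> nat \<Rightarrow> nat \<Rightarrow> 'a ^'n ^'n" where
  "mprod f l m = foldr (\<lambda>i acc. f i ** acc) [l..<Suc m] (mat 1)"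

definition block :: "'a::zero ^'n ^'n \<Rightarrow> 'a ^'m ^'n \<Rightarrow> 'a ^'n ^'m \<Rightarrow> 'a ^'m ^'m
    \<Rightarrow> 'a ^('n + 'm) ^('n + 'm)" where
  "block B11 B12 B21 B22 = (\<chi> i j. (case i of
      Inl a \<Rightarrow> (case j of Inl b \<Rightarrow> B11 $ a $ b | Inr b \<Rightarrow> B12 $ a $ b)
    | Inr a \<Rightarrow> (case j of Inl b \<Rightarrow> B21 $ a $ b | Inr b \<Rightarrow> B22 $ a $ b)))"

end

theory Submission
  imports Defs
begin

context idem_semifield begin
subclass canonically_ordered_monoid_add
proof
  fix a b :: 'a
  show "a \<le> b \<longleftrightarrow> (\<exists>c. b = a + c)"
  proof
    assume "a \<le> b" thus "\<exists>c. b = a + c" by (metis less_eq_iff_add)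
  next
    assume "\<exists>c. b = a + c"
    then obtain c where "b = a + c" by blast
    thus "a \<le> b" by (simp add: less_eq_iff_add add.assoc[symmetric] add_idem)
  qed
qed

lemma idem_add_mono: "a \<le> b \<Longrightarrow> c + a \<le> c + b"
proof -
  assume "a \<le> b"
  hence "a + b = b" by (simp add: less_eq_iff_add)
  hence "c + a + (c + b) = c + b"
    by (metis add.assoc add.left_commute add_idem)
  thus ?thesis by (simp add: less_eq_iff_add)
qed

lemma idem_mult_mono: "a \<le> b \<Longrightarrow> c * a \<le> c * b"
proof -
  assume "a \<le> b"
  hence "a + b = b" by (simp add: less_eq_iff_add)
  hence "c * a + c * b = c * b" by (metis distrib_left)
  thus ?thesis by (simp add: less_eq_iff_add)
qed

subclass ordered_comm_semiring
  by standard (auto intro: idem_add_mono idem_mult_mono)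

lemma idem_add_le: "x \<le> z \<Longrightarrow> y \<le> z \<Longrightarrow> x + y \<le> z"
  by (metis add.assoc less_eq_iff_add)

lemma idem_sum_le: "finite S \<Longrightarrow> (\<And>i. i \<in> S \<Longrightarrow> f i \<le> c) \<Longrightarrow> sum f S \<le> c"
  by (induction S rule: finite_induct) (auto intro: idem_add_le)
end

lemma mprod_Suc:
  assumes "l \<le> Suc m"
  shows "mprod f l (Suc m) = mprod f l m ** f (Suc m)"
proof -
  have fr: "foldr (\<lambda>i acc. f i ** acc) xs (B ** C) = foldr (\<lambda>i acc. f i ** acc) xs B ** C" for xs B C
    by (induction xs) (auto simp: matrix_mul_assoc)
  have eq: "[l..<Suc (Suc m)] = [l..<Suc m] @ [Suc m]" using assms by simp
  have "mprod f l (Suc m) = foldr (\<lambda>i acc. f i ** acc) ([l..<Suc m] @ [Suc m]) (mat 1)"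
    by (simp only: mprod_def eq)
  also have "\<dots> = foldr (\<lambda>i acc. f i ** acc) [l..<Suc m] (mat 1 ** f (Suc m))"
    by (simp del: upt_Suc)
  also have "\<dots> = mprod f l m ** f (Suc m)"
    by (simp only: fr mprod_def)
  finally show ?thesis .
qed

lemma mprod_empty: "m < l \<Longrightarrow> mprod f l m = mat 1"
  by (simp add: mprod_def)

lemma matrix_add_rdistrib': "((B + C) ** (A::'a::semiring_1^_^_)) = (B ** A) + (C ** A)"
  by (vector matrix_matrix_mult_def sum.distrib[symmetric] field_simps)

lemma matrix_sum_rdistrib:
  "finite S \<Longrightarrow> (\<Sum>i\<in>S. P i) ** (Z::'a::semiring_1^_^_) = (\<Sum>i\<in>S. P i ** Z)"
  by (induction S rule: finite_induct) (auto simp: matrix_add_rdistrib')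

lemma sum_UNIV_Plus:
  "(\<Sum>k\<in>(UNIV::('n::finite+'m::finite) set). f k) = (\<Sum>k\<in>UNIV. f (Inl k)) + (\<Sum>k\<in>UNIV. f (Inr k))"
proof -
  have "(\<Sum>k\<in>(UNIV::('n+'m) set). f k) = (\<Sum>k\<in>(UNIV <+> UNIV). f k)" by simp
  also have "\<dots> = (\<Sum>k\<in>UNIV. f (Inl k)) + (\<Sum>k\<in>UNIV. f (Inr k))"
    by (simp only: sum.Plus finite comp_def)
  finally show ?thesis .
qed

lemma block_mult:
  "block a b 0 d ** block a' b' 0 d' = block (a ** a') (a ** b' + b ** d') 0 (d ** d')"
proof -
  have "(block a b 0 d ** block a' b' 0 d') $ i $ j
      = block (a ** a') (a ** b' + b ** d') 0 (d ** d') $ i $ j" for i j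
    unfolding block_def matrix_matrix_mult_def vec_lambda_beta sum_UNIV_Plus
    by (cases i; cases j) (simp_all add: sum.distrib)
  thus ?thesis by (simp add: vec_eq_iff)
qed

lemma block_add:
  "block a b c d + block a' b' c' d' = block (a + a') (b + b') (c + c') (d + d')"
  unfolding block_def by (auto simp: vec_eq_iff split: sum.splits)

lemma block_one: "(mat 1 :: 'a::semiring_1^_^_) = block (mat 1) 0 0 (mat 1)"
  unfolding block_def mat_def by (auto simp: vec_eq_iff split: sum.splits)

lemma tnorm_block: "tnorm (block a b c d) = tnorm a + tnorm b + tnorm c + tnorm d"
  unfolding tnorm_def block_def
  by (simp add: sum_UNIV_Plus sum.distrib ac_simps)

lemma tnorm_zero: "tnorm (0::'a::idem_semifield^_^_) = 0"
  by (simp add: tnorm_def)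

lemma tnorm_add: "tnorm (M + N) = tnorm M + tnorm N"
  by (simp add: tnorm_def sum.distrib)

lemma tnorm_sum: "finite S \<Longrightarrow> tnorm (\<Sum>i\<in>S. M i) = (\<Sum>i\<in>S. tnorm (M i))"
  by (induction S rule: finite_induct) (auto simp: tnorm_add tnorm_zero)

lemma entry_le_tnorm: "M $ i $ j \<le> tnorm M"
proof -
  have "M $ i $ j \<le> (\<Sum>j\<in>UNIV. M $ i $ j)" by (rule member_le_sum) auto
  also have "\<dots> \<le> (\<Sum>i\<in>UNIV. \<Sum>j\<in>UNIV. M $ i $ j)"
    by (rule member_le_sum[where f="\<lambda>i. \<Sum>j\<in>UNIV. M $ i $ j"]) auto
  finally show ?thesis unfolding tnorm_def .
qed

lemma tnorm_mult: "tnorm (M ** N) \<le> tnorm M * tnorm N"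
proof -
  have "(M ** N) $ i $ j \<le> tnorm M * tnorm N" for i j
    unfolding matrix_matrix_mult_def vec_lambda_beta
    by (auto intro!: idem_sum_le mult_mono entry_le_tnorm)
  thus ?thesis unfolding tnorm_def[of "M ** N"]
    by (auto intro!: idem_sum_le)
qed

theorem proposition1:
  fixes D1 :: "nat \<Rightarrow> 'a::idem_semifield ^'n::finite ^'n"
    and D2 :: "nat \<Rightarrow> 'a ^'m::finite ^'m"
    and T12 :: "nat \<Rightarrow> 'a ^'m ^'n"
    and k :: nat
  defines "D \<equiv> \<lambda>i. block (D1 i) 0 0 (D2 i)"
    and "T \<equiv> \<lambda>i. block 0 (T12 i) 0 0"
  defines "A \<equiv> \<lambda>i. D i + T i"
  shows "tnorm (mprod D1 1 k) + tnorm (mprod D2 1 k) \<le> tnorm (mprod A 1 k)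
     \<and> tnorm (mprod A 1 k) \<le> tnorm (mprod D1 1 k) + tnorm (mprod D2 1 k)
          + (\<Sum>j\<in>{1..k}. tnorm (T j))
            * (\<Sum>i\<in>{1..k}. tnorm (mprod D1 1 (i - 1)) * tnorm (mprod D2 (i + 1) k))"
proof -
  define X where "X k = (\<Sum>i\<in>{1..k}. mprod D1 1 (i - 1) ** T12 i ** mprod D2 (i + 1) k)" for k
  have Ai: "A i = block (D1 i) (T12 i) 0 (D2 i)" for i
    unfolding A_def D_def T_def block_add by simp
  have key: "mprod A 1 k = block (mprod D1 1 k) (X k) 0 (mprod D2 1 k)" for k
  proof (induction k)
    case 0
    show ?case by (simp add: mprod_empty X_def block_one[symmetric])
  next
    case (Suc k)
    have XS: "X (Suc k) = mprod D1 1 k ** T12 (Suc k) + X k ** D2 (Suc k)"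
    proof -
      have "X (Suc k) = (\<Sum>i\<in>{1..k}. mprod D1 1 (i - 1) ** T12 i ** mprod D2 (i + 1) (Suc k))
           + mprod D1 1 k ** T12 (Suc k) ** mprod D2 (Suc k + 1) (Suc k)"
        unfolding X_def by (simp add: add.commute)
      also have "(\<Sum>i\<in>{1..k}. mprod D1 1 (i - 1) ** T12 i ** mprod D2 (i + 1) (Suc k))
          = (\<Sum>i\<in>{1..k}. mprod D1 1 (i - 1) ** T12 i ** mprod D2 (i + 1) k ** D2 (Suc k))"
        by (intro sum.cong refl) (simp add: mprod_Suc matrix_mul_assoc)
      also have "\<dots> = X k ** D2 (Suc k)"
        unfolding X_def by (simp add: matrix_sum_rdistrib)
      finally show ?thesis by (simp add: mprod_empty add.commute)
    qed
    have "mprod A 1 (Suc k) = mprod A 1 k ** A (Suc k)" by (rule mprod_Suc) simp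
    also have "\<dots> = block (mprod D1 1 k) (X k) 0 (mprod D2 1 k) ** block (D1 (Suc k)) (T12 (Suc k)) 0 (D2 (Suc k))"
      by (simp only: Suc.IH Ai)
    also have "\<dots> = block (mprod D1 1 (Suc k)) (X (Suc k)) 0 (mprod D2 1 (Suc k))"
    proof -
      have m1: "mprod D1 1 (Suc k) = mprod D1 1 k ** D1 (Suc k)" by (rule mprod_Suc) simp
      have m2: "mprod D2 1 (Suc k) = mprod D2 1 k ** D2 (Suc k)" by (rule mprod_Suc) simp
      show ?thesis by (simp only: block_mult XS m1 m2)
    qed
    finally show ?case .
  qed
  have tT: "tnorm (T j) = tnorm (T12 j)" for j
    unfolding T_def by (simp add: tnorm_block tnorm_zero)
  have nA: "tnorm (mprod A 1 k) = tnorm (mprod D1 1 k) + tnorm (X k) + tnorm (mprod D2 1 k)"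
    unfolding key by (simp add: tnorm_block tnorm_zero)
  let ?ST = "\<Sum>j\<in>{1..k}. tnorm (T j)"
  let ?SP = "\<Sum>i\<in>{1..k}. tnorm (mprod D1 1 (i - 1)) * tnorm (mprod D2 (i + 1) k)"
  have "tnorm (X k) \<le> ?ST * ?SP"
  proof -
    have "tnorm (X k) = (\<Sum>i\<in>{1..k}. tnorm (mprod D1 1 (i - 1) ** T12 i ** mprod D2 (i + 1) k))"
      unfolding X_def by (simp add: tnorm_sum)
    also have "\<dots> \<le> ?ST * ?SP"
    proof (rule idem_sum_le)
      fix i assume i: "i \<in> {1..k}"
      have "tnorm (mprod D1 1 (i - 1) ** T12 i ** mprod D2 (i + 1) k)
          \<le> tnorm (mprod D1 1 (i - 1) ** T12 i) * tnorm (mprod D2 (i + 1) k)"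
        by (rule tnorm_mult)
      also have "\<dots> \<le> tnorm (mprod D1 1 (i - 1)) * tnorm (T12 i) * tnorm (mprod D2 (i + 1) k)"
        by (intro mult_right_mono tnorm_mult) simp
      also have "\<dots> = tnorm (T i) * (tnorm (mprod D1 1 (i - 1)) * tnorm (mprod D2 (i + 1) k))"
        by (simp add: tT ac_simps)
      also have "\<dots> \<le> ?ST * ?SP"
        by (intro mult_mono member_le_sum[OF i]) auto
      finally show "tnorm (mprod D1 1 (i - 1) ** T12 i ** mprod D2 (i + 1) k) \<le> ?ST * ?SP" .
    qed simp
    finally show ?thesis .
  qed
  then have up: "tnorm (mprod A 1 k) \<le> tnorm (mprod D1 1 k) + tnorm (mprod D2 1 k) + ?ST * ?SP"
  proof -
    assume h: "tnorm (X k) \<le> ?ST * ?SP"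
    have "tnorm (mprod A 1 k) = (tnorm (mprod D1 1 k) + tnorm (mprod D2 1 k)) + tnorm (X k)"
      unfolding nA by (simp only: ac_simps)
    also have "\<dots> \<le> tnorm (mprod D1 1 k) + tnorm (mprod D2 1 k) + ?ST * ?SP"
      using h by (rule add_left_mono)
    finally show ?thesis .
  qed
  have lo: "tnorm (mprod D1 1 k) + tnorm (mprod D2 1 k) \<le> tnorm (mprod A 1 k)"
  proof -
    have "tnorm (mprod A 1 k) = (tnorm (mprod D1 1 k) + tnorm (mprod D2 1 k)) + tnorm (X k)"
      unfolding nA by (simp only: ac_simps)
    thus ?thesis by (simp only: le_iff_add) blast
  qed
  show ?thesis using lo up by blast
qed

end
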